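(* Fix integers $k \ge 1$ and $n \ge 1$. For every database $D$ of $n$ rows and every neighboring database $D'$, $|\mathrm{SSA}(D) - \mathrm{SSA}(D')| \le 9 + 5/n$. That is, the sensitivity of $\mathrm{SSA}$ is at most $9 + 5/n$.
   Context: A database $D$ consists of $n$ rows. Each row is a pair $(g, y)$ with group label $g \in \{1,\dots,k\}$ and response value $y \in [0,1]$; the number of groups $k$ is fixed. For group $i$ let $n_i$ be the number of rows with label $i$, so $\sum_i n_i = n$. Let $\overline{y}_i$ be the mean response in group $i$, and let $\overline{y}$ be the mean of all $n$ responses; groups with $n_i = 0$ contribute nothing. Define $\mathrm{SSA}(D) = \sum_{i=1}^k n_i(\overline{y}_i - \overline{y})^2$. Two databases with $n$ rows each are neighboring if they differ in exactly one row; the changed row may have a different group label and/or a different response value. The sensitivity of a real-valued function $f$ on databases is $\max |f(D) - f(D')|$, taken over all neighboring pairs. *)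

theory Defs
  imports Complex_Main
begin

(* A database is a list of rows (g, y) with group label g and response y. *)
type_synonym database = "(nat \<times> real) list"

definition valid_db :: "nat \<Rightarrow> nat \<Rightarrow> database \<Rightarrow> bool" where
  "valid_db k n D \<longleftrightarrow> length D = n \<and>
     (\<forall>r \<in> set D. fst r \<in> {1..k} \<and> 0 \<le> snd r \<and> snd r \<le> 1)"

definition grp_count :: "database \<Rightarrow> nat \<Rightarrow> nat" where
  "grp_count D i = card {j. j < length D \<and> fst (D ! j) = i}"

(* mean response in group i (value irrelevant when the group is empty) *)
definition grp_mean :: "database \<Rightarrow> nat \<Rightarrow> real" where
  "grp_mean D i = (\<Sum>j | j < length D \<and> fst (D ! j) = i. snd (D ! j)) / real (grp_count D i)"

definition total_mean :: "database \<Rightarrow> real" where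
  "total_mean D = (\<Sum>j<length D. snd (D ! j)) / real (length D)"

definition SSA :: "nat \<Rightarrow> database \<Rightarrow> real" where
  "SSA k D = (\<Sum>i=1..k. real (grp_count D i) * (grp_mean D i - total_mean D)^2)"

definition neighboring :: "database \<Rightarrow> database \<Rightarrow> bool" where
  "neighboring D D' \<longleftrightarrow> length D = length D' \<and>
     card {j. j < length D \<and> D ! j \<noteq> D' ! j} = 1"

end

theory Submission
  imports Defs
begin

lemma kl_up: fixes S m y :: real
  assumes "0\<le>S" "S\<le>m" "0\<le>y" "y\<le>1"
  shows "(S+y)^2/(m+1) - S^2/m \<le> 2"
proof -
  have a: "S^2/(m+1) \<le> S^2/m" 
  proof (cases "m=0")
    case True then show ?thesis using assms by simp
  next
    case False then show ?thesis using assms by (intro divide_left_mono) auto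
  qed
  have "(S+y)^2/(m+1) - S^2/(m+1) = y*(2*S+y)/(m+1)" by (simp add: diff_divide_distrib[symmetric] power2_eq_square algebra_simps)
  also have "\<dots> \<le> 1*(2*m+2)/(m+1)" using assms by (intro divide_right_mono mult_mono) auto
  also have "\<dots> = 2" using assms by (simp add: field_simps)
  finally show ?thesis using a by linarith
qed
lemma kl_lo: fixes S m y :: real
  assumes "0\<le>S" "S\<le>m" "0\<le>y" "y\<le>1"
  shows "-1 \<le> (S+y)^2/(m+1) - S^2/m"
proof (cases "m=0")
  case True
  have "(S+y)^2/(m+1) - S^2/m = y^2" using True assms by simp
  moreover have "0 \<le> y^2" by simp
  ultimately show ?thesis by linarith
next
  case False
  hence mp: "m>0" using assms by simp
  have "S^2/(m+1) \<le> (S+y)^2/(m+1)" using assms by (intro divide_right_mono power_mono) auto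
  moreover have "S^2/m - S^2/(m+1) = S^2/(m*(m+1))" using mp by (simp add: field_simps)
  moreover have "S^2/(m*(m+1)) \<le> 1"
  proof -
    have "S^2 \<le> m^2" using assms by (intro power_mono) auto
    also have "\<dots> \<le> m*(m+1)" using mp by (simp add: power2_eq_square field_simps)
    finally show ?thesis using mp by simp
  qed
  ultimately show ?thesis by linarith
qed

definition cntr :: "database \<Rightarrow> nat set \<Rightarrow> nat \<Rightarrow> real" where
  "cntr D A i = (\<Sum>j\<in>A. if fst (D!j) = i then 1 else 0)"
definition smr :: "database \<Rightarrow> nat set \<Rightarrow> nat \<Rightarrow> real" where
  "smr D A i = (\<Sum>j\<in>A. if fst (D!j) = i then snd (D!j) else 0)"

lemma filt: "{j. j < L \<and> P j} = {j\<in>{..<L}. P j}" by auto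

lemma sf: "(\<Sum>j | j<(L::nat) \<and> P j. f j) = (\<Sum>j<L. if P j then f j else (0::real))"
proof -
  have e: "{j. j<L \<and> P j} = {j\<in>{..<L}. P j}" by auto
  show ?thesis unfolding e by (rule sum.inter_filter) simp
qed

lemma gc: "real (grp_count D i) = cntr D {..<length D} i"
  unfolding grp_count_def cntr_def filt
  by (simp add: sum.inter_filter[symmetric])

lemma gm: "grp_mean D i = smr D {..<length D} i / cntr D {..<length D} i"
proof -
  have "(\<Sum>j | j < length D \<and> fst (D ! j) = i. snd (D ! j)) = smr D {..<length D} i"
    unfolding smr_def by (rule sf)
  then show ?thesis unfolding grp_mean_def gc by simp
qed

lemma bnds:
  assumes "\<forall>r\<in>set D. 0 \<le> snd r \<and> snd r \<le> 1" "A \<subseteq> {..<length D}"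
  shows "0 \<le> smr D A i \<and> smr D A i \<le> cntr D A i"
proof -
  have r: "\<And>j. j\<in>A \<Longrightarrow> 0 \<le> snd (D!j) \<and> snd (D!j) \<le> 1"
    using assms nth_mem by blast
  show ?thesis unfolding smr_def cntr_def
    using r by (auto intro!: sum_nonneg sum_mono)
qed

lemma SSA_eq:
  assumes v: "valid_db k n D" and n: "n \<ge> 1"
  shows "SSA k D = (\<Sum>i=1..k. smr D {..<n} i ^2 / cntr D {..<n} i)
        - (\<Sum>j<n. snd (D!j))^2 / n"
proof -
  have L: "length D = n" using v unfolding valid_db_def by simp
  have lab: "\<And>j. j<n \<Longrightarrow> fst (D!j) \<in> {1..k}"
    using v L unfolding valid_db_def by (metis nth_mem)
  define T where "T = (\<Sum>j<n. snd (D!j))"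
  define tm where "tm = T / n"
  have tm: "total_mean D = tm" unfolding total_mean_def tm_def T_def L ..
  have b: "\<And>i. 0 \<le> smr D {..<n} i \<and> smr D {..<n} i \<le> cntr D {..<n} i"
    using bnds[of D "{..<n}"] v L unfolding valid_db_def by auto
  have trm: "real (grp_count D i) * (grp_mean D i - total_mean D)^2
     = smr D {..<n} i ^2 / cntr D {..<n} i - 2 * smr D {..<n} i * tm + cntr D {..<n} i * tm^2" for i
  proof (cases "cntr D {..<n} i = 0")
    case True
    then have "smr D {..<n} i = 0" using b[of i] by simp
    then show ?thesis using True unfolding gc gm L by simp
  next
    case False
    then show ?thesis unfolding gc gm L tm by (simp add: field_simps power2_eq_square)
  qed
  have sS: "(\<Sum>i=1..k. smr D {..<n} i) = T"
  proof -
    have "(\<Sum>i=1..k. smr D {..<n} i) = (\<Sum>j<n. \<Sum>i=1..k. if fst (D!j) = i then snd (D!j) else 0)"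
      unfolding smr_def by (rule sum.swap)
    also have "\<dots> = T" unfolding T_def using lab by (intro sum.cong) auto
    finally show ?thesis .
  qed
  have sC: "(\<Sum>i=1..k. cntr D {..<n} i) = n"
  proof -
    have "(\<Sum>i=1..k. cntr D {..<n} i) = (\<Sum>j<n. \<Sum>i=1..k. if fst (D!j) = i then (1::real) else 0)"
      unfolding cntr_def by (rule sum.swap)
    also have "\<dots> = (\<Sum>j<n. (1::real))" using lab by (intro sum.cong) auto
    finally show ?thesis by simp
  qed
  have "SSA k D = (\<Sum>i=1..k. smr D {..<n} i ^2 / cntr D {..<n} i)
        - 2 * (\<Sum>i=1..k. smr D {..<n} i) * tm + (\<Sum>i=1..k. cntr D {..<n} i) * tm^2"
    unfolding SSA_def trm
    by (simp add: sum.distrib sum_subtractf sum_distrib_left sum_distrib_right mult.assoc)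
  also have "\<dots> = (\<Sum>i=1..k. smr D {..<n} i ^2 / cntr D {..<n} i) - T^2/n"
    unfolding sS sC tm_def using n by (simp add: field_simps power2_eq_square)
  finally show ?thesis unfolding T_def .
qed

lemma decomp:
  assumes "j0 < n"
  shows "smr D {..<n} i = smr D ({..<n}-{j0}) i + (if fst (D!j0) = i then snd (D!j0) else 0)"
    and "cntr D {..<n} i = cntr D ({..<n}-{j0}) i + (if fst (D!j0) = i then 1 else 0)"
  using assms unfolding smr_def cntr_def
  by (simp_all add: sum.remove[of "{..<n}" j0])

lemma step:
  assumes v: "valid_db k n D" and j: "j0 < n"
  shows "-1 \<le> (\<Sum>i=1..k. smr D {..<n} i^2/cntr D {..<n} i)
            - (\<Sum>i=1..k. smr D ({..<n}-{j0}) i^2/cntr D ({..<n}-{j0}) i)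
      \<and> (\<Sum>i=1..k. smr D {..<n} i^2/cntr D {..<n} i)
            - (\<Sum>i=1..k. smr D ({..<n}-{j0}) i^2/cntr D ({..<n}-{j0}) i) \<le> 2"
proof -
  define A where "A = {..<n}-{j0}"
  define g where "g = fst (D!j0)"
  define y where "y = snd (D!j0)"
  define R where "R = smr D A"
  define C where "C = cntr D A"
  have L: "length D = n" using v unfolding valid_db_def by simp
  have g: "g \<in> {1..k}" and y: "0 \<le> y" "y \<le> 1"
    using v L j unfolding valid_db_def g_def y_def by (metis nth_mem)+
  have RC: "0 \<le> R g" "R g \<le> C g"
    using bnds[of D A g] v L unfolding valid_db_def R_def C_def A_def by auto
  have pt: "smr D {..<n} i^2/cntr D {..<n} i - R i^2/C i
     = (if i = g then (R g + y)^2/(C g + 1) - R g^2/C g else 0)" for i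
    using decomp[OF j, of D i] unfolding R_def C_def A_def g_def y_def by auto
  have "(\<Sum>i=1..k. smr D {..<n} i^2/cntr D {..<n} i) - (\<Sum>i=1..k. R i^2/C i)
      = (\<Sum>i=1..k. smr D {..<n} i^2/cntr D {..<n} i - R i^2/C i)"
    by (simp add: sum_subtractf)
  also have "\<dots> = (R g + y)^2/(C g + 1) - R g^2/C g"
    unfolding pt using g by (simp add: sum.delta)
  finally have e: "(\<Sum>i=1..k. smr D {..<n} i^2/cntr D {..<n} i) - (\<Sum>i=1..k. R i^2/C i)
      = (R g + y)^2/(C g + 1) - R g^2/C g" .
  show ?thesis using e kl_up[OF RC y] kl_lo[OF RC y] unfolding R_def C_def A_def by linarith
qed

theorem mainTheorem2:
  fixes k n :: nat and D D' :: database
  assumes "k \<ge> 1" and "n \<ge> 1"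
    and "valid_db k n D" and "valid_db k n D'"
    and "neighboring D D'"
  shows "\<bar>SSA k D - SSA k D'\<bar> \<le> 9 + 5 / real n"
proof -
  have L: "length D = n" "length D' = n" using assms(3,4) unfolding valid_db_def by auto
  obtain j0 where j0: "{j. j < n \<and> D ! j \<noteq> D' ! j} = {j0}"
    proof -
    have "card {j. j < n \<and> D ! j \<noteq> D' ! j} = 1" using assms(5) L unfolding neighboring_def by simp
    then show ?thesis using that by (metis card_1_singletonE)
  qed
  have jn: "j0 < n" using j0 by auto
  have same: "\<And>j. j \<in> {..<n}-{j0} \<Longrightarrow> D!j = D'!j" using j0 by blast
  define A where "A = {..<n}-{j0}"
  have eqS: "smr D A i = smr D' A i" for i unfolding smr_def using same A_def by (intro sum.cong) auto
  have eqC: "cntr D A i = cntr D' A i" for i unfolding cntr_def using same A_def by (intro sum.cong) auto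
  define Q where "Q (E::database) = (\<Sum>i=1..k. smr E {..<n} i^2/cntr E {..<n} i)" for E
  define Q0 where "Q0 = (\<Sum>i=1..k. smr D A i^2/cntr D A i)"
  have Q0': "Q0 = (\<Sum>i=1..k. smr D' A i^2/cntr D' A i)" unfolding Q0_def eqS eqC ..
  have s1: "-1 \<le> Q D - Q0 \<and> Q D - Q0 \<le> 2" using step[OF assms(3) jn] unfolding Q_def Q0_def A_def .
  have s2: "-1 \<le> Q D' - Q0 \<and> Q D' - Q0 \<le> 2" using step[OF assms(4) jn] unfolding Q_def Q0' A_def .
  define T where "T (E::database) = (\<Sum>j<n. snd (E!j))" for E
  have Tb: "0 \<le> T E \<and> T E \<le> n" if v: "valid_db k n E" for E
  proof -
    have r: "\<And>j. j<n \<Longrightarrow> 0 \<le> snd (E!j) \<and> snd (E!j) \<le> 1"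
      using v unfolding valid_db_def by (metis nth_mem)
    have "T E \<le> (\<Sum>j<n. 1)" unfolding T_def using r by (intro sum_mono) auto
    moreover have "0 \<le> T E" unfolding T_def using r by (intro sum_nonneg) auto
    ultimately show ?thesis by simp
  qed
  have yb: "0 \<le> snd (E!j0) \<and> snd (E!j0) \<le> 1" if v: "valid_db k n E" for E
    using v jn unfolding valid_db_def by (metis nth_mem)
  have Tsplit: "T E = snd (E!j0) + (\<Sum>j\<in>A. snd (E!j))" for E
    unfolding T_def A_def using jn by (simp add: sum.remove[of "{..<n}" j0])
  have TA: "(\<Sum>j\<in>A. snd (D!j)) = (\<Sum>j\<in>A. snd (D'!j))" using same A_def by (intro sum.cong) auto
  have dT: "\<bar>T D - T D'\<bar> \<le> 1" using Tsplit[of D] Tsplit[of D'] TA yb[OF assms(3)] yb[OF assms(4)] by linarith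
  have sT: "T D + T D' \<le> 2 * real n" using Tb[OF assms(3)] Tb[OF assms(4)] by linarith
  have "\<bar>T D^2 - T D'^2\<bar> = \<bar>T D - T D'\<bar> * (T D + T D')"
  proof -
    have "T D^2 - T D'^2 = (T D - T D') * (T D + T D')" by (simp add: power2_eq_square algebra_simps)
    then show ?thesis using Tb[OF assms(3)] Tb[OF assms(4)] by (simp add: abs_mult)
  qed
  also have "\<dots> \<le> 1 * (2 * real n)" using dT sT Tb[OF assms(3)] Tb[OF assms(4)] by (intro mult_mono) auto
  finally have "\<bar>T D^2 - T D'^2\<bar> / n \<le> 2" using assms(2) by (simp add: divide_le_eq)
  hence t2: "\<bar>T D^2/n - T D'^2/n\<bar> \<le> 2" by (simp add: diff_divide_distrib[symmetric])
  have "SSA k D - SSA k D' = (Q D - Q0) - (Q D' - Q0) - (T D^2/n - T D'^2/n)"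
    unfolding SSA_eq[OF assms(3,2)] SSA_eq[OF assms(4,2)] Q_def T_def by simp
  hence "\<bar>SSA k D - SSA k D'\<bar> \<le> 5" using s1 s2 t2 by linarith
  moreover have "0 \<le> 5 / real n" by simp
  ultimately show ?thesis by linarith
qed

end
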